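(* Let $\lambda\in\mathbb R$ and let $\xi$ be a pseudo symmetric measure. Let $\ell=(1,\lambda,\lambda)'$, $\ell_2=(0,1,1)'$, $Q_{\xi,2}=\ell_2'V_\xi\ell_2$ and $q_{\xi,2}^*=\ell'V_\xi\ell-(\ell'V_\xi\ell_2)^2\,Q_{\xi,2}^+$ (where $a^+=1/a$ for $a\ne0$ and $0^+=0$). Then for every $\tau\in\mathcal T$ the eigenvalues of $\tilde C_\xi(\tau)$, counted with multiplicity, are $0$ (multiplicity $1$), $(t-1)^{-1}q_{\xi,2}^*$ (multiplicity $1$) and $(t-1)^{-1}\ell'V_\xi\ell$ (multiplicity $t-2$). Moreover $q_{\xi,2}^*\le\ell'V_\xi\ell$.
   Context: Fix integers $k\ge 2$ and $t\ge 2$. Let $\mathcal S$ be the set of all $t^k$ sequences $s=(t_1,\dots,t_k)$ with entries $t_j\in\{1,\dots,t\}$. For $s\in\mathcal S$ let $T_s$ be the $k\times t$ matrix with $(j,i)$ entry equal to $1$ if $t_j=i$ and $0$ otherwise; let $H$ be the $k\times k$ matrix with $(i,j)$ entry $1$ if $i\equiv j+1\pmod k$ and $0$ otherwise; put $L_s=HT_s$, $R_s=H'T_s$ (a prime denotes transpose). Let $\Sigma$ be a fixed $k\times k$ positive definite matrix, $1_k$ the all-ones vector, and $\tilde B=\Sigma^{-1}-\Sigma^{-1}1_k1_k'\Sigma^{-1}/(1_k'\Sigma^{-1}1_k)$. With $G_0=T_s,G_1=L_s,G_2=R_s$ define for $0\le i,j\le 2$ the $t\times t$ matrices $C_{sij}=G_i'\tilde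 BG_j$. A measure is a vector $\xi=(p_s)_{s\in\mathcal S}$ with $p_s\ge0$, $\sum_sp_s=1$. Put $C_{\xi ij}=\sum_sp_sC_{sij}$, $c_{\xi ij}=\operatorname{tr}(C_{\xi ij})$, $V_\xi=(c_{\xi ij})_{0\le i,j\le2}$. The measure $\xi$ is pseudo symmetric if each $C_{\xi ij}$ is completely symmetric, i.e. of the form $aI_t+bJ_t$ with $J_t$ the all-ones matrix. $M^+$ denotes the Moore–Penrose inverse. For $u,w\in\mathbb R^3$ (coordinates indexed $0,1,2$) let $C_\xi[u,w]=\sum_{i,j=0}^2u_iw_jC_{\xi ij}$. Let $\mathcal T=\{x\in\mathbb R^t:1_t'x=0,\ x\ne0\}$. For $u\in\mathbb R^3$, vectors $w_1,\dots,w_m\in\mathbb R^3$ ($m\in\{1,2\}$) and $x\in\mathcal T$ define $\mathcal I_\xi(u;w_1,\dots,w_m;x)=C_\xi[u,u]-F'G^+F$, where $F$ is the $m\times t$ matrix whose $a$-th row is $(C_\xi[u,w_a]x)'$ and $G$ is the $m\times m$ matrix with entries $x'C_\xi[w_a,w_b]x$. Undirectional model: the information matrix of $\xi$ for the direct treatment effect is $\tilde C_\xi(\tau)=\mathcal I_\xi(\ell;\ell_2;\tau)$, $\tau\in\mathcal T$, with $\ell=(1,\lambda,\lambda)'$, $\ell_2=(0,1,1)'$. *)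

theory Defs
  imports "Jordan_Normal_Form.Matrix" "Jordan_Normal_Form.Char_Poly"
begin

(* Indices are 0-based: rows/periods j \<in> {0..<k}, treatments i \<in> {0..<t}. *)

definition seqs :: "nat \<Rightarrow> nat \<Rightarrow> nat list set" where
  "seqs k t = {s. length s = k \<and> set s \<subseteq> {0..<t}}"

definition Tmat :: "nat \<Rightarrow> nat \<Rightarrow> nat list \<Rightarrow> real mat" where
  "Tmat k t s = mat k t (\<lambda>(j,i). if s ! j = i then 1 else 0)"

definition Hmat :: "nat \<Rightarrow> real mat" where
  "Hmat k = mat k k (\<lambda>(i,j). if i = (j + 1) mod k then 1 else 0)"

definition Lmat :: "nat \<Rightarrow> nat \<Rightarrow> nat list \<Rightarrow> real mat" where
  "Lmat k t s = Hmat k * Tmat k t s"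

definition Rmat :: "nat \<Rightarrow> nat \<Rightarrow> nat list \<Rightarrow> real mat" where
  "Rmat k t s = (Hmat k)\<^sup>T * Tmat k t s"

definition pos_def_mat :: "nat \<Rightarrow> real mat \<Rightarrow> bool" where
  "pos_def_mat k A \<longleftrightarrow> A \<in> carrier_mat k k \<and> A\<^sup>T = A \<and>
     (\<forall>x \<in> carrier_vec k. x \<noteq> 0\<^sub>v k \<longrightarrow> x \<bullet> (A *\<^sub>v x) > 0)"

definition mat_inv :: "real mat \<Rightarrow> real mat" where
  "mat_inv A = (THE B. B \<in> carrier_mat (dim_row A) (dim_row A) \<and>
                 A * B = 1\<^sub>m (dim_row A) \<and> B * A = 1\<^sub>m (dim_row A))"

definition mp_inv :: "real mat \<Rightarrow> real mat" where
  "mp_inv A = (THE X. X \<in> carrier_mat (dim_col A) (dim_row A) \<and>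
      A * X * A = A \<and> X * A * X = X \<and> (A * X)\<^sup>T = A * X \<and> (X * A)\<^sup>T = X * A)"

definition ones_vec :: "nat \<Rightarrow> real vec" where
  "ones_vec n = vec n (\<lambda>_. 1)"

definition Btilde :: "nat \<Rightarrow> real mat \<Rightarrow> real mat" where
  "Btilde k Sg = (let Si = mat_inv Sg; e = ones_vec k in
     Si - (1 / (e \<bullet> (Si *\<^sub>v e))) \<cdot>\<^sub>m (Si * mat_of_cols k [e] * mat_of_rows k [e] * Si))"

definition Gmat :: "nat \<Rightarrow> nat \<Rightarrow> nat list \<Rightarrow> nat \<Rightarrow> real mat" where
  "Gmat k t s i = (if i = 0 then Tmat k t s else if i = 1 then Lmat k t s else Rmat k t s)"

definition Cs :: "nat \<Rightarrow> nat \<Rightarrow> real mat \<Rightarrow> nat list \<Rightarrow> nat \<Rightarrow> nat \<Rightarrow> real mat" where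
  "Cs k t Sg s i j = (Gmat k t s i)\<^sup>T * Btilde k Sg * Gmat k t s j"

definition is_measure :: "nat \<Rightarrow> nat \<Rightarrow> (nat list \<Rightarrow> real) \<Rightarrow> bool" where
  "is_measure k t p \<longleftrightarrow> (\<forall>s \<in> seqs k t. p s \<ge> 0) \<and> (\<Sum>s \<in> seqs k t. p s) = 1"

definition Cxi :: "nat \<Rightarrow> nat \<Rightarrow> real mat \<Rightarrow> (nat list \<Rightarrow> real) \<Rightarrow> nat \<Rightarrow> nat \<Rightarrow> real mat" where
  "Cxi k t Sg p i j = mat t t (\<lambda>(a,b). \<Sum>s \<in> seqs k t. p s * Cs k t Sg s i j $$ (a,b))"

definition trace_mat :: "real mat \<Rightarrow> real" where
  "trace_mat A = (\<Sum>i < dim_row A. A $$ (i,i))"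

definition Vxi :: "nat \<Rightarrow> nat \<Rightarrow> real mat \<Rightarrow> (nat list \<Rightarrow> real) \<Rightarrow> real mat" where
  "Vxi k t Sg p = mat 3 3 (\<lambda>(i,j). trace_mat (Cxi k t Sg p i j))"

definition completely_symmetric :: "nat \<Rightarrow> real mat \<Rightarrow> bool" where
  "completely_symmetric t A \<longleftrightarrow>
     (\<exists>a b. A = a \<cdot>\<^sub>m 1\<^sub>m t + b \<cdot>\<^sub>m mat t t (\<lambda>_. 1))"

definition pseudo_symmetric :: "nat \<Rightarrow> nat \<Rightarrow> real mat \<Rightarrow> (nat list \<Rightarrow> real) \<Rightarrow> bool" where
  "pseudo_symmetric k t Sg p \<longleftrightarrow>
     (\<forall>i < 3. \<forall>j < 3. completely_symmetric t (Cxi k t Sg p i j))"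

definition Cuw :: "nat \<Rightarrow> nat \<Rightarrow> real mat \<Rightarrow> (nat list \<Rightarrow> real) \<Rightarrow> real vec \<Rightarrow> real vec \<Rightarrow> real mat" where
  "Cuw k t Sg p u w = mat t t (\<lambda>(a,b).
     \<Sum>i < 3. \<Sum>j < 3. u $ i * w $ j * Cxi k t Sg p i j $$ (a,b))"

definition contrast_set :: "nat \<Rightarrow> real vec set" where
  "contrast_set t = {x \<in> carrier_vec t. ones_vec t \<bullet> x = 0 \<and> x \<noteq> 0\<^sub>v t}"

definition Info :: "nat \<Rightarrow> nat \<Rightarrow> real mat \<Rightarrow> (nat list \<Rightarrow> real) \<Rightarrow> real vec \<Rightarrow> real vec list \<Rightarrow> real vec \<Rightarrow> real mat" where
  "Info k t Sg p u ws x = (let m = length ws;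
      F = mat m t (\<lambda>(a,b). (Cuw k t Sg p u (ws ! a) *\<^sub>v x) $ b);
      G = mat m m (\<lambda>(a,b). x \<bullet> (Cuw k t Sg p (ws ! a) (ws ! b) *\<^sub>v x))
    in Cuw k t Sg p u u - F\<^sup>T * mp_inv G * F)"

definition ell :: "real \<Rightarrow> real vec" where
  "ell lam = vec_of_list [1, lam, lam]"

definition ell2 :: "real vec" where
  "ell2 = vec_of_list [0, 1, 1]"

definition Ctilde :: "nat \<Rightarrow> nat \<Rightarrow> real mat \<Rightarrow> (nat list \<Rightarrow> real) \<Rightarrow> real \<Rightarrow> real vec \<Rightarrow> real mat" where
  "Ctilde k t Sg p lam tau = Info k t Sg p (ell lam) [ell2] tau"

end

theory Submission
  imports Defs
begin


lemma det_rank_one: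
  fixes v w :: "nat \<Rightarrow> real"
  shows "det (mat n n (\<lambda>(i,j). (if i = j then 1 else 0) + v i * w j)) = 1 + (\<Sum>i<n. w i * v i)"
proof -
  define I where "I = (1\<^sub>m n :: real mat)"
  define Vc where "Vc = mat n 1 (\<lambda>(i,_). v i)"
  define Wr where "Wr = mat 1 n (\<lambda>(_,j). - w j)"
  define d where "d = 1 + (\<Sum>i<n. w i * v i)"
  define D where "D = mat 1 1 (\<lambda>_. d)"
  define M where "M = mat n n (\<lambda>(i,j). (if i = j then 1 else 0) + v i * w j)"
  define A where "A = four_block_mat I Vc Wr (1\<^sub>m 1)"
  have c: "I \<in> carrier_mat n n" "Vc \<in> carrier_mat n 1" "Wr \<in> carrier_mat 1 n" "M \<in> carrier_mat n n"
     "D \<in> carrier_mat 1 1" "(0\<^sub>m n 1 :: real mat) \<in> carrier_mat n 1" "(0\<^sub>m 1 n :: real mat) \<in> carrier_mat 1 n"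
     "(1\<^sub>m 1 :: real mat) \<in> carrier_mat 1 1"
    by (auto simp: I_def Vc_def Wr_def M_def D_def)
  have p1: "four_block_mat I (0\<^sub>m n 1) Wr (1\<^sub>m 1) * four_block_mat I Vc (0\<^sub>m 1 n) D
      = four_block_mat (I * I + 0\<^sub>m n 1 * 0\<^sub>m 1 n) (I * Vc + 0\<^sub>m n 1 * D) (Wr * I + 1\<^sub>m 1 * 0\<^sub>m 1 n) (Wr * Vc + 1\<^sub>m 1 * D)"
    by (rule mult_four_block_mat[OF c(1) c(6) c(3) c(8) c(1) c(2) c(7) c(5)])
  have e1: "A = four_block_mat I (0\<^sub>m n 1) Wr (1\<^sub>m 1) * four_block_mat I Vc (0\<^sub>m 1 n) D"
    unfolding p1 A_def
    apply (rule cong_four_block_mat)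
    using c apply (auto simp: I_def)
    apply (rule eq_matI)
      apply (auto simp: Wr_def Vc_def d_def D_def scalar_prod_def sum_negf atLeast0LessThan)
    done
  have d1: "det A = d"
    unfolding e1
    apply (subst det_mult[of _ "n+1"])
    using c apply auto[2]
    apply (subst det_four_block_mat_upper_right_zero[OF c(1) refl c(3) c(8)])
    apply (subst det_four_block_mat_lower_left_zero[OF c(1) c(2) refl c(5)])
    apply (simp add: I_def det_single D_def)
    done
  have p2: "four_block_mat M Vc (0\<^sub>m 1 n) (1\<^sub>m 1) * four_block_mat I (0\<^sub>m n 1) Wr (1\<^sub>m 1)
      = four_block_mat (M * I + Vc * Wr) (M * 0\<^sub>m n 1 + Vc * 1\<^sub>m 1) (0\<^sub>m 1 n * I + 1\<^sub>m 1 * Wr) (0\<^sub>m 1 n * 0\<^sub>m n 1 + 1\<^sub>m 1 * 1\<^sub>m 1)"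
    by (rule mult_four_block_mat[OF c(4) c(2) c(7) c(8) c(1) c(6) c(3) c(8)])
  have e2: "A = four_block_mat M Vc (0\<^sub>m 1 n) (1\<^sub>m 1) * four_block_mat I (0\<^sub>m n 1) Wr (1\<^sub>m 1)"
    unfolding p2 A_def
    apply (rule cong_four_block_mat)
    using c apply (auto simp: I_def)
    apply (rule eq_matI)
      apply (auto simp: Wr_def Vc_def M_def scalar_prod_def)
    done
  have d2: "det A = det M"
    unfolding e2
    apply (subst det_mult[of _ "n+1"])
    using c apply auto[2]
    apply (subst det_four_block_mat_upper_right_zero[OF c(1) refl c(3) c(8)])
    apply (subst det_four_block_mat_lower_left_zero[OF c(4) c(2) refl c(8)])
    apply (simp add: I_def)
    done
  show ?thesis using d1 d2 by (simp add: M_def d_def)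
qed


lemma poly_eq_except_one:
  fixes p q :: "real poly"
  assumes "\<And>x. x \<noteq> a \<Longrightarrow> poly p x = poly q x"
  shows "p = q"
proof (rule ccontr)
  assume "p \<noteq> q"
  hence "p - q \<noteq> 0" by simp
  hence f: "finite {x. poly (p - q) x = 0}" using poly_roots_finite by blast
  have "UNIV - {a} \<subseteq> {x. poly (p - q) x = 0}" using assms by auto
  hence "finite (UNIV - {a} :: real set)" using f finite_subset by blast
  thus False by (simp add: infinite_UNIV_char_0)
qed

lemma sum_delta_l: "i < (n::nat) \<Longrightarrow> (\<Sum>l<n. (if i = l then 1 else 0) * (f l :: real)) = f i"
proof -
  assume "i < n"
  have "(\<Sum>l<n. (if i = l then 1 else 0) * (f l :: real)) = (\<Sum>l<n. if i = l then f l else 0)"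
    by (rule sum.cong) auto
  thus ?thesis using \<open>i < n\<close> by simp
qed

lemma sum_delta_r: "j < (n::nat) \<Longrightarrow> (\<Sum>l<n. (f l :: real) * (if l = j then 1 else 0)) = f j"
proof -
  assume "j < n"
  have "(\<Sum>l<n. (f l :: real) * (if l = j then 1 else 0)) = (\<Sum>l<n. if j = l then f l else 0)"
    by (rule sum.cong) auto
  thus ?thesis using \<open>j < n\<close> by simp
qed

lemma char_poly_rank_two:
  fixes u w :: "nat \<Rightarrow> real"
  assumes n: "n \<ge> 2" and orth: "(\<Sum>i<n. u i * w i) = 0"
  shows "char_poly (mat n n (\<lambda>(i,j). (if i = j then al else 0) + a * u i * u j + b * w i * w j))
     = [:- (al + a * (\<Sum>i<n. u i * u i)), 1:] * [:- (al + b * (\<Sum>i<n. w i * w i)), 1:] * [:- al, 1:] ^ (n - 2)"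
    (is "char_poly ?M = ?R")
proof (rule poly_eq_except_one[of al])
  fix x assume x: "x \<noteq> al"
  define c where "c = x - al"
  have c0: "c \<noteq> 0" using x by (simp add: c_def)
  define N1 where "N1 = mat n n (\<lambda>(i,j). (if i = j then 1 else 0) + (- a / c * u i) * u j)"
  define N2 where "N2 = mat n n (\<lambda>(i,j). (if i = j then 1 else 0) + (- b / c * w i) * w j)"
  have M: "?M \<in> carrier_mat n n" by simp
  have cN: "N1 \<in> carrier_mat n n" "N2 \<in> carrier_mat n n" by (auto simp: N1_def N2_def)
  have eq: "- (char_matrix ?M x) = (c \<cdot>\<^sub>m N1) * N2"
  proof (rule eq_matI)
    fix i j assume ij: "i < dim_row ((c \<cdot>\<^sub>m N1) * N2)" "j < dim_col ((c \<cdot>\<^sub>m N1) * N2)"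
    hence i: "i < n" and j: "j < n" using cN by auto
    have "((c \<cdot>\<^sub>m N1) * N2) $$ (i,j) = (\<Sum>l<n. c * ((if i = l then 1 else 0) + (- a / c * u i) * u l) *
          ((if l = j then 1 else 0) + (- b / c * w l) * w j))"
      using i j cN by (simp add: scalar_prod_def atLeast0LessThan N1_def N2_def)
    also have "\<dots> = (\<Sum>l<n. (if i = l then 1 else 0) * (c * (if l = j then 1 else 0)))
        + (\<Sum>l<n. (if i = l then 1 else 0) * (- b * w l * w j))
        + (\<Sum>l<n. (- a * u i * u l) * (if l = j then 1 else 0))
        + (a * b / c) * u i * w j * (\<Sum>l<n. u l * w l)"
      proof -
        have "\<And>l. c * ((if i = l then 1 else 0) + (- a / c * u i) * u l) *
          ((if l = j then 1 else 0) + (- b / c * w l) * w j) =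
          (if i = l then 1 else 0) * (c * (if l = j then 1 else 0)) + (if i = l then 1 else 0) * (- b * w l * w j)
          + (- a * u i * u l) * (if l = j then 1 else 0) + (a * b / c) * u i * w j * (u l * w l)"
          using c0 by (simp add: field_simps)
        hence "(\<Sum>l<n. c * ((if i = l then 1 else 0) + (- a / c * u i) * u l) *
          ((if l = j then 1 else 0) + (- b / c * w l) * w j)) = (\<Sum>l<n.
          (if i = l then 1 else 0) * (c * (if l = j then 1 else 0)) + (if i = l then 1 else 0) * (- b * w l * w j)
          + (- a * u i * u l) * (if l = j then 1 else 0) + (a * b / c) * u i * w j * (u l * w l))"
          by (rule sum.cong[OF refl])
        also have "\<dots> = (\<Sum>l<n. (if i = l then 1 else 0) * (c * (if l = j then 1 else 0)))
        + (\<Sum>l<n. (if i = l then 1 else 0) * (- b * w l * w j))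
        + (\<Sum>l<n. (- a * u i * u l) * (if l = j then 1 else 0))
        + (a * b / c) * u i * w j * (\<Sum>l<n. u l * w l)"
          by (simp only: sum.distrib sum_distrib_left)
        finally show ?thesis .
      qed
    also have "\<dots> = c * (if i = j then 1 else 0) - b * w i * w j - a * u i * u j"
      proof -
        have s1: "(\<Sum>l<n. (if i = l then 1 else 0) * (c * (if l = j then 1 else 0))) = c * (if i = j then 1 else 0)"
          by (rule sum_delta_l[OF i])
        have s2: "(\<Sum>l<n. (if i = l then 1 else 0) * (- b * w l * w j)) = - b * w i * w j"
          by (rule sum_delta_l[OF i])
        have s3: "(\<Sum>l<n. - a * u i * u l * (if l = j then 1 else 0)) = - a * u i * u j"
          by (rule sum_delta_r[OF j])
        show ?thesis unfolding s1 s2 s3 orth by simp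
      qed
    finally show "(- char_matrix ?M x) $$ (i,j) = ((c \<cdot>\<^sub>m N1) * N2) $$ (i,j)"
      using i j by (simp add: char_matrix_def c_def)
  qed (use cN in \<open>auto simp: char_matrix_def\<close>)
  have "poly (char_poly ?M) x = det (- (char_matrix ?M x))" by (rule char_poly_matrix[OF M])
  also have "\<dots> = c ^ n * det N1 * det N2"
    unfolding eq using cN by (simp add: det_mult[of _ n])
  also have "det N1 = 1 + (\<Sum>i<n. u i * (- a / c * u i))" unfolding N1_def by (rule det_rank_one)
  also have "det N2 = 1 + (\<Sum>i<n. w i * (- b / c * w i))" unfolding N2_def by (rule det_rank_one)
  also have "c ^ n = c * c * c ^ (n - 2)" using n
    by (metis (no_types, lifting) add_2_eq_Suc le_add_diff_inverse mult.assoc power.simps(2))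
  finally have "poly (char_poly ?M) x = c * c * c ^ (n - 2) * (1 - a / c * (\<Sum>i<n. u i * u i)) * (1 - b / c * (\<Sum>i<n. w i * w i))"
    by (simp add: sum_distrib_left algebra_simps sum_negf)
  also have "\<dots> = (c - a * (\<Sum>i<n. u i * u i)) * (c - b * (\<Sum>i<n. w i * w i)) * c ^ (n - 2)"
    using c0 by (simp add: field_simps)
  also have "\<dots> = poly ?R x" by (simp add: c_def algebra_simps)
  finally show "poly (char_poly ?M) x = poly ?R x" .
qed


definition qf :: "real mat \<Rightarrow> nat \<Rightarrow> (nat \<Rightarrow> real) \<Rightarrow> (nat \<Rightarrow> real) \<Rightarrow> real" where
  "qf S k x y = (\<Sum>r<k. \<Sum>q<k. x r * S $$ (r,q) * y q)"

lemma qf_vec: assumes "S \<in> carrier_mat k k"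
  shows "vec k x \<bullet> (S *\<^sub>v vec k y) = qf S k x y"
  using assms by (simp add: qf_def scalar_prod_def atLeast0LessThan sum_distrib_left row_def ac_simps)

lemma mat_inv_props:
  assumes pd: "pos_def_mat k Sg"
  shows "mat_inv Sg \<in> carrier_mat k k \<and> Sg * mat_inv Sg = 1\<^sub>m k \<and> mat_inv Sg * Sg = 1\<^sub>m k"
proof -
  have S: "Sg \<in> carrier_mat k k" using pd by (simp add: pos_def_mat_def)
  have "det Sg \<noteq> 0"
  proof
    assume "det Sg = 0"
    then obtain v where v: "v \<in> carrier_vec k" "v \<noteq> 0\<^sub>v k" "Sg *\<^sub>v v = 0\<^sub>v k"
      using det_0_iff_vec_prod_zero_field[OF S] by blast
    have "v \<bullet> (Sg *\<^sub>v v) > 0" using pd v unfolding pos_def_mat_def by blast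
    thus False using v by simp
  qed
  from det_non_zero_imp_unit[OF S this, of "()"]
  obtain B where B: "B \<in> carrier_mat k k" "Sg * B = 1\<^sub>m k" "B * Sg = 1\<^sub>m k"
    by (auto simp: Units_def ring_mat_def)
  have dr: "dim_row Sg = k" using S by simp
  have "(THE B. B \<in> carrier_mat k k \<and> Sg * B = 1\<^sub>m k \<and> B * Sg = 1\<^sub>m k) = B"
  proof (rule the_equality)
    show "B \<in> carrier_mat k k \<and> Sg * B = 1\<^sub>m k \<and> B * Sg = 1\<^sub>m k" using B by simp
    fix B' assume B': "B' \<in> carrier_mat k k \<and> Sg * B' = 1\<^sub>m k \<and> B' * Sg = 1\<^sub>m k"
    have "B' = B' * (Sg * B)" using B B' right_mult_one_mat[of B' k k] by simp
    also have "\<dots> = (B' * Sg) * B" by (rule assoc_mult_mat[symmetric, of B' k k Sg k B k], insert B B' S, auto)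
    also have "\<dots> = B" using B B' by simp
    finally show "B' = B" .
  qed
  thus ?thesis using B unfolding mat_inv_def dr by simp
qed

lemma mat_inv_sym:
  assumes pd: "pos_def_mat k Sg"
  shows "(mat_inv Sg)\<^sup>T = mat_inv Sg"
proof -
  define Si where "Si = mat_inv Sg"
  have S: "Sg \<in> carrier_mat k k" "Sg\<^sup>T = Sg" using pd by (auto simp: pos_def_mat_def)
  have Si: "Si \<in> carrier_mat k k" "Sg * Si = 1\<^sub>m k" "Si * Sg = 1\<^sub>m k" using mat_inv_props[OF pd] by (auto simp: Si_def)
  have "Si\<^sup>T * Sg = 1\<^sub>m k"
  proof -
    have "(Sg * Si)\<^sup>T = Si\<^sup>T * Sg\<^sup>T" using transpose_mult[OF S(1) Si(1)] .
    thus ?thesis using Si S by simp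
  qed
  hence "Si\<^sup>T = Si\<^sup>T * (Sg * Si)" using Si by simp
  also have "\<dots> = (Si\<^sup>T * Sg) * Si" using Si S by (simp add: assoc_mult_mat)
  also have "\<dots> = Si" using \<open>Si\<^sup>T * Sg = 1\<^sub>m k\<close> Si by simp
  finally show ?thesis by (simp add: Si_def)
qed

lemma Sg_quad: assumes pd: "pos_def_mat k Sg" and z: "z \<in> carrier_vec k"
  shows "(Sg *\<^sub>v z) \<bullet> z = z \<bullet> (Sg *\<^sub>v z)"
proof -
  have S: "Sg \<in> carrier_mat k k" "Sg\<^sup>T = Sg" using pd by (auto simp: pos_def_mat_def)
  have "(Sg\<^sup>T *\<^sub>v z) \<bullet> z = z \<bullet> (Sg *\<^sub>v z)"
    by (rule transpose_vec_mult_scalar[OF S(1) z z])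
  thus ?thesis using S by simp
qed

lemma Si_psd:
  assumes pd: "pos_def_mat k Sg"
  shows "qf (mat_inv Sg) k y y \<ge> 0"
proof -
  define Si where "Si = mat_inv Sg"
  have S: "Sg \<in> carrier_mat k k" "Sg\<^sup>T = Sg" using pd by (auto simp: pos_def_mat_def)
  have Si: "Si \<in> carrier_mat k k" "Sg * Si = 1\<^sub>m k" "Si * Sg = 1\<^sub>m k" using mat_inv_props[OF pd] by (auto simp: Si_def)
  define yv where "yv = vec k y"
  define z where "z = Si *\<^sub>v yv"
  have z: "z \<in> carrier_vec k" using Si by (simp add: z_def yv_def)
  have "Sg *\<^sub>v z = (Sg * Si) *\<^sub>v yv" unfolding z_def by (rule assoc_mult_mat_vec[symmetric, OF S(1) Si(1)], simp add: yv_def)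
  also have "\<dots> = yv" using Si by (simp add: yv_def)
  finally have yz: "Sg *\<^sub>v z = yv" .
  have "qf Si k y y = yv \<bullet> (Si *\<^sub>v yv)" using qf_vec[OF Si(1)] by (simp add: yv_def)
  also have "\<dots> = yv \<bullet> z" by (simp add: z_def)
  also have "\<dots> = (Sg *\<^sub>v z) \<bullet> z" by (simp add: yz)
  also have "\<dots> = z \<bullet> (Sg *\<^sub>v z)" using Sg_quad[OF pd z] .
  also have "\<dots> \<ge> 0"
  proof (cases "z = 0\<^sub>v k")
    case True thus ?thesis using S by simp
  next
    case False thus ?thesis using pd z by (auto simp: pos_def_mat_def intro: less_imp_le)
  qed
  finally show ?thesis by (simp add: Si_def)
qed



definition rs :: "real mat \<Rightarrow> nat \<Rightarrow> nat \<Rightarrow> real" where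
  "rs S k r = (\<Sum>p<k. S $$ (r,p))"

lemma qf_sym: assumes "\<And>r q. r < k \<Longrightarrow> q < k \<Longrightarrow> S $$ (r,q) = S $$ (q,r)"
  shows "qf S k x y = qf S k y x"
proof -
  have "qf S k x y = (\<Sum>q<k. \<Sum>r<k. x r * S $$ (r,q) * y q)" unfolding qf_def by (rule sum.swap)
  also have "\<dots> = qf S k y x" unfolding qf_def
    by (rule sum.cong[OF refl], rule sum.cong[OF refl], simp add: assms ac_simps)
  finally show ?thesis .
qed

lemma qf_shift: "qf S k (\<lambda>r. y r - c) (\<lambda>r. y r - c) = qf S k y y - c * qf S k (\<lambda>_. 1) y - c * qf S k y (\<lambda>_. 1) + c * c * qf S k (\<lambda>_. 1) (\<lambda>_. 1)"
proof -
  have "qf S k (\<lambda>r. y r - c) (\<lambda>r. y r - c) = (\<Sum>r<k. \<Sum>q<k. y r * S $$ (r,q) * y q - c * (1 * S $$ (r,q) * y q)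
     - c * (y r * S $$ (r,q) * 1) + c * c * (1 * S $$ (r,q) * 1))"
    unfolding qf_def by (rule sum.cong[OF refl], rule sum.cong[OF refl], simp add: algebra_simps)
  also have "\<dots> = qf S k y y - c * qf S k (\<lambda>_. 1) y - c * qf S k y (\<lambda>_. 1) + c * c * qf S k (\<lambda>_. 1) (\<lambda>_. 1)"
    unfolding qf_def by (simp only: sum.distrib sum_subtractf sum_distrib_left)
  finally show ?thesis .
qed

context
  fixes k :: nat and Sg :: "real mat"
  assumes pd: "pos_def_mat k Sg" and k: "k > 0"
begin

definition "Si = mat_inv Sg"
definition "dd = qf Si k (\<lambda>_. 1) (\<lambda>_. 1)"

lemma Si: "Si \<in> carrier_mat k k" "Sg * Si = 1\<^sub>m k" "Si * Sg = 1\<^sub>m k"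
  using mat_inv_props[OF pd] by (auto simp: Si_def)

lemma Si_sym: "r < k \<Longrightarrow> q < k \<Longrightarrow> Si $$ (r,q) = Si $$ (q,r)"
proof -
  assume "r < k" "q < k"
  hence "Si\<^sup>T $$ (r,q) = Si $$ (q,r)" using Si by simp
  thus ?thesis using mat_inv_sym[OF pd] by (simp add: Si_def)
qed

lemma dd_eq: "ones_vec k \<bullet> (Si *\<^sub>v ones_vec k) = dd"
  using qf_vec[OF Si(1), of "\<lambda>_. 1" "\<lambda>_. 1"] by (simp add: dd_def ones_vec_def)

lemma dd_rs: "dd = (\<Sum>r<k. rs Si k r)"
  by (simp add: dd_def qf_def rs_def)

lemma dd_pos: "dd > 0"
proof -
  have S: "Sg \<in> carrier_mat k k" using pd by (simp add: pos_def_mat_def)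
  define e where "e = ones_vec k"
  define z where "z = Si *\<^sub>v e"
  have e: "e \<in> carrier_vec k" by (simp add: e_def ones_vec_def)
  have z: "z \<in> carrier_vec k" using Si e by (simp add: z_def)
  have "Sg *\<^sub>v z = (Sg * Si) *\<^sub>v e" unfolding z_def by (rule assoc_mult_mat_vec[symmetric, OF S Si(1) e])
  also have "\<dots> = e" using Si e by simp
  finally have yz: "Sg *\<^sub>v z = e" .
  have "z \<noteq> 0\<^sub>v k"
  proof
    assume "z = 0\<^sub>v k"
    moreover have "Sg *\<^sub>v 0\<^sub>v k = 0\<^sub>v k" by (intro eq_vecI, insert S, auto)
    ultimately have "e = 0\<^sub>v k" using yz by simp
    hence "e $ 0 = 0" using k by simp
    thus False using k by (simp add: e_def ones_vec_def)
  qed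
  hence pos: "z \<bullet> (Sg *\<^sub>v z) > 0" using pd z unfolding pos_def_mat_def by blast
  have "dd = e \<bullet> z" using dd_eq by (simp add: e_def z_def)
  also have "\<dots> = (Sg *\<^sub>v z) \<bullet> z" by (simp add: yz)
  also have "\<dots> = z \<bullet> (Sg *\<^sub>v z)" using Sg_quad[OF pd z] .
  finally show ?thesis using pos by simp
qed

lemma Btilde_carrier: "Btilde k Sg \<in> carrier_mat k k"
  using Si unfolding Btilde_def Let_def Si_def[symmetric] by (auto simp: ones_vec_def)

lemma Btilde_entry: assumes r: "r < k" and q: "q < k"
  shows "Btilde k Sg $$ (r,q) = Si $$ (r,q) - (1 / dd) * rs Si k r * rs Si k q"
proof -
  define e where "e = ones_vec k"
  have e: "e \<in> carrier_vec k" "\<And>i. i < k \<Longrightarrow> e $ i = 1" by (auto simp: e_def ones_vec_def)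
  have P: "(Si * mat_of_cols k [e] * mat_of_rows k [e] * Si) $$ (r,q) = rs Si k r * rs Si k q"
  proof -
    have c1: "mat_of_cols k [e] \<in> carrier_mat k 1" "mat_of_rows k [e] \<in> carrier_mat 1 k" by auto
    have a: "(Si * mat_of_cols k [e] * mat_of_rows k [e]) $$ (r,l) = rs Si k r" if l: "l < k" for l
      using r l Si c1 e by (simp add: scalar_prod_def atLeast0LessThan rs_def mat_of_cols_def mat_of_rows_def)
    have "(Si * mat_of_cols k [e] * mat_of_rows k [e] * Si) $$ (r,q) = (\<Sum>l<k. (Si * mat_of_cols k [e] * mat_of_rows k [e]) $$ (r,l) * Si $$ (l,q))"
      using r q Si c1 by (simp add: scalar_prod_def atLeast0LessThan)
    also have "\<dots> = (\<Sum>l<k. rs Si k r * Si $$ (q,l))"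
      by (rule sum.cong[OF refl], simp add: a Si_sym q)
    also have "\<dots> = rs Si k r * rs Si k q" by (simp add: rs_def sum_distrib_left)
    finally show ?thesis .
  qed
  have "Btilde k Sg = Si - (1 / dd) \<cdot>\<^sub>m (Si * mat_of_cols k [e] * mat_of_rows k [e] * Si)"
    unfolding Btilde_def Let_def Si_def[symmetric] e_def[symmetric] using dd_eq by (simp add: e_def)
  thus ?thesis using P r q Si by simp
qed

lemma Btilde_rowsum: assumes r: "r < k" shows "(\<Sum>q<k. Btilde k Sg $$ (r,q)) = 0"
proof -
  have "(\<Sum>q<k. Btilde k Sg $$ (r,q)) = (\<Sum>q<k. Si $$ (r,q) - (1 / dd * rs Si k r) * rs Si k q)"
    by (rule sum.cong[OF refl], simp add: Btilde_entry r)
  also have "\<dots> = rs Si k r - (1 / dd * rs Si k r) * dd"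
    by (simp only: sum_subtractf rs_def[symmetric] sum_distrib_left[symmetric] dd_rs[symmetric])
  also have "\<dots> = 0" using dd_pos by simp
  finally show ?thesis .
qed

lemma Btilde_psd: "qf (Btilde k Sg) k y y \<ge> 0"
proof -
  define A where "A = qf Si k y y"
  define Bv where "Bv = qf Si k y (\<lambda>_. 1)"
  have sym: "qf Si k (\<lambda>_. 1) y = Bv" unfolding Bv_def by (rule qf_sym, rule Si_sym)
  have Bv: "Bv = (\<Sum>r<k. y r * rs Si k r)" by (simp add: Bv_def qf_def rs_def sum_distrib_left)
  define c where "c = Bv / dd"
  have "0 \<le> qf Si k (\<lambda>r. y r - c) (\<lambda>r. y r - c)" unfolding Si_def by (rule Si_psd[OF pd])
  also have "\<dots> = A - Bv * Bv / dd" unfolding qf_shift sym using dd_pos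
    by (simp add: A_def Bv_def[symmetric] c_def dd_def[symmetric] field_simps)
  finally have 1: "0 \<le> A - Bv * Bv / dd" .
  have "qf (Btilde k Sg) k y y = (\<Sum>r<k. \<Sum>q<k. y r * Si $$ (r,q) * y q - (1/dd) * ((y r * rs Si k r) * (y q * rs Si k q)))"
    unfolding qf_def by (rule sum.cong[OF refl], rule sum.cong[OF refl], simp add: Btilde_entry algebra_simps)
  also have "\<dots> = A - Bv * Bv / dd"
    by (simp only: sum_subtractf A_def qf_def Bv sum_distrib_left[symmetric] sum_product) simp
  finally show ?thesis using 1 by simp
qed

end


lemma Tmat_carrier[simp]: "Tmat k t s \<in> carrier_mat k t" by (simp add: Tmat_def)
lemma Hmat_carrier[simp]: "Hmat k \<in> carrier_mat k k" by (simp add: Hmat_def)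
lemma Gmat_carrier[simp]: "Gmat k t s i \<in> carrier_mat k t"
  by (auto simp: Gmat_def Lmat_def Rmat_def intro!: mult_carrier_mat[of _ k k])

lemma sum4_swap: "(\<Sum>i\<in>A. \<Sum>j\<in>B. \<Sum>q\<in>C. \<Sum>r\<in>D. f i j q r) = (\<Sum>r\<in>D. \<Sum>q\<in>C. \<Sum>i\<in>A. \<Sum>j\<in>B. (f i j q r :: real))"
proof -
  have "(\<Sum>i\<in>A. \<Sum>j\<in>B. \<Sum>q\<in>C. \<Sum>r\<in>D. f i j q r) = (\<Sum>i\<in>A. \<Sum>q\<in>C. \<Sum>j\<in>B. \<Sum>r\<in>D. f i j q r)"
    by (rule sum.cong[OF refl], rule sum.swap)
  also have "\<dots> = (\<Sum>q\<in>C. \<Sum>i\<in>A. \<Sum>j\<in>B. \<Sum>r\<in>D. f i j q r)" by (rule sum.swap)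
  also have "\<dots> = (\<Sum>q\<in>C. \<Sum>i\<in>A. \<Sum>r\<in>D. \<Sum>j\<in>B. f i j q r)"
    by (rule sum.cong[OF refl], rule sum.cong[OF refl], rule sum.swap)
  also have "\<dots> = (\<Sum>q\<in>C. \<Sum>r\<in>D. \<Sum>i\<in>A. \<Sum>j\<in>B. f i j q r)"
    by (rule sum.cong[OF refl], rule sum.swap)
  also have "\<dots> = (\<Sum>r\<in>D. \<Sum>q\<in>C. \<Sum>i\<in>A. \<Sum>j\<in>B. f i j q r)" by (rule sum.swap)
  finally show ?thesis .
qed

lemma H_rowsum: assumes q: "q < k" shows "(\<Sum>j<k. Hmat k $$ (q,j)) = 1"
proof -
  define j0 where "j0 = (if q = 0 then k - 1 else q - 1)"
  have j0: "j0 < k" using q by (auto simp: j0_def)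
  have "(\<Sum>j<k. Hmat k $$ (q,j)) = (\<Sum>j<k. if j = j0 then 1 else 0)"
  proof (rule sum.cong[OF refl])
    fix j assume "j \<in> {..<k}"
    hence j: "j < k" by simp
    have "(q = (j + 1) mod k) \<longleftrightarrow> j = j0"
    proof (cases "j + 1 = k")
      case True
      hence "(j + 1) mod k = 0" by simp
      thus ?thesis using True q by (auto simp: j0_def)
    next
      case False
      hence "(j + 1) mod k = j + 1" using j by simp
      thus ?thesis using False q j by (auto simp: j0_def)
    qed
    thus "Hmat k $$ (q,j) = (if j = j0 then 1 else 0)" using q j by (simp add: Hmat_def)
  qed
  also have "\<dots> = 1" using j0 by simp
  finally show ?thesis .
qed

lemma HT_rowsum: assumes q: "q < k" shows "(\<Sum>j<k. (Hmat k)\<^sup>T $$ (q,j)) = 1"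
proof -
  have "(\<Sum>j<k. (Hmat k)\<^sup>T $$ (q,j)) = (\<Sum>j<k. if j = (q + 1) mod k then 1 else 0)"
    by (rule sum.cong[OF refl], insert q, auto simp: Hmat_def)
  also have "\<dots> = 1" using q by simp
  finally show ?thesis .
qed

lemma T_rowsum: assumes s: "s \<in> seqs k t" and q: "q < k" shows "(\<Sum>b<t. Tmat k t s $$ (q,b)) = 1"
proof -
  have "s ! q \<in> set s" using s q by (auto simp: seqs_def)
  hence lt: "s ! q < t" using s by (auto simp: seqs_def)
  have "(\<Sum>b<t. Tmat k t s $$ (q,b)) = (\<Sum>b<t. if b = s ! q then 1 else 0)"
    by (rule sum.cong[OF refl], insert q, auto simp: Tmat_def)
  also have "\<dots> = 1" using lt by simp
  finally show ?thesis .
qed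

lemma prod_rowsum: assumes A: "A \<in> carrier_mat k k" and B: "B \<in> carrier_mat k t" and q: "q < k"
  and rA: "(\<Sum>j<k. A $$ (q,j)) = 1" and rB: "\<And>j. j < k \<Longrightarrow> (\<Sum>b<t. B $$ (j,b)) = (1::real)"
  shows "(\<Sum>b<t. (A * B) $$ (q,b)) = 1"
proof -
  have "(\<Sum>b<t. (A * B) $$ (q,b)) = (\<Sum>b<t. \<Sum>j<k. A $$ (q,j) * B $$ (j,b))"
    by (rule sum.cong[OF refl], insert A B q, auto simp: scalar_prod_def atLeast0LessThan)
  also have "\<dots> = (\<Sum>j<k. A $$ (q,j) * (\<Sum>b<t. B $$ (j,b)))"
    by (subst sum.swap, simp add: sum_distrib_left)
  also have "\<dots> = (\<Sum>j<k. A $$ (q,j))" by (rule sum.cong[OF refl], simp add: rB)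
  finally show ?thesis using rA by simp
qed

lemma G_rowsum: assumes s: "s \<in> seqs k t" and q: "q < k"
  shows "(\<Sum>b<t. Gmat k t s i $$ (q,b)) = 1"
proof -
  have T: "\<And>j. j < k \<Longrightarrow> (\<Sum>b<t. Tmat k t s $$ (j,b)) = 1" using T_rowsum[OF s] by blast
  show ?thesis
    unfolding Gmat_def Lmat_def Rmat_def
    using T_rowsum[OF s q] prod_rowsum[OF Hmat_carrier Tmat_carrier q H_rowsum[OF q] T]
      prod_rowsum[OF _ Tmat_carrier q HT_rowsum[OF q] T]
    by auto
qed

lemma Gmat_dims[simp]: "dim_row (Gmat k t s i) = k" "dim_col (Gmat k t s i) = t"
  using Gmat_carrier[of k t s i] unfolding carrier_mat_def by blast+

lemma Cs_entry: assumes pd: "pos_def_mat k Sg" and k: "k > 0" and a: "a < t" and b: "b < t"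
  shows "Cs k t Sg s i j $$ (a,b) = (\<Sum>q<k. (\<Sum>r<k. Gmat k t s i $$ (r,a) * Btilde k Sg $$ (r,q)) * Gmat k t s j $$ (q,b))"
proof -
  have B: "dim_row (Btilde k Sg) = k" "dim_col (Btilde k Sg) = k" using Btilde_carrier[OF pd k] by auto
  show ?thesis using a b B by (simp add: Cs_def scalar_prod_def atLeast0LessThan)
qed

lemma Cs_rowsum: assumes pd: "pos_def_mat k Sg" and k: "k > 0" and a: "a < t" and s: "s \<in> seqs k t"
  shows "(\<Sum>b<t. Cs k t Sg s i j $$ (a,b)) = 0"
proof -
  have "(\<Sum>b<t. Cs k t Sg s i j $$ (a,b)) = (\<Sum>b<t. \<Sum>q<k. (\<Sum>r<k. Gmat k t s i $$ (r,a) * Btilde k Sg $$ (r,q)) * Gmat k t s j $$ (q,b))"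
    by (rule sum.cong[OF refl], simp add: Cs_entry[OF pd k a])
  also have "\<dots> = (\<Sum>q<k. (\<Sum>r<k. Gmat k t s i $$ (r,a) * Btilde k Sg $$ (r,q)) * (\<Sum>b<t. Gmat k t s j $$ (q,b)))"
    by (subst sum.swap, simp add: sum_distrib_left)
  also have "\<dots> = (\<Sum>q<k. \<Sum>r<k. Gmat k t s i $$ (r,a) * Btilde k Sg $$ (r,q))"
    by (rule sum.cong[OF refl], simp add: G_rowsum[OF s])
  also have "\<dots> = (\<Sum>r<k. Gmat k t s i $$ (r,a) * (\<Sum>q<k. Btilde k Sg $$ (r,q)))"
    by (subst sum.swap, simp add: sum_distrib_left)
  also have "\<dots> = 0" by (simp add: Btilde_rowsum[OF pd k])
  finally show ?thesis .
qed

lemma Cs_quad: assumes pd: "pos_def_mat k Sg" and k: "k > 0" and a: "a < t"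
  shows "(\<Sum>i<3. \<Sum>j<3. u i * u j * Cs k t Sg s i j $$ (a,a)) \<ge> 0"
proof -
  define y where "y r = (\<Sum>i<3. u i * Gmat k t s i $$ (r,a))" for r
  have "(\<Sum>i<3. \<Sum>j<3. u i * u j * Cs k t Sg s i j $$ (a,a)) =
     (\<Sum>i<3. \<Sum>j<3. \<Sum>q<k. \<Sum>r<k. (u i * Gmat k t s i $$ (r,a)) * Btilde k Sg $$ (r,q) * (u j * Gmat k t s j $$ (q,a)))"
    by (simp add: Cs_entry[OF pd k a a] sum_distrib_left sum_distrib_right ac_simps)
  also have "\<dots> = (\<Sum>r<k. \<Sum>q<k. \<Sum>i<3. \<Sum>j<3. (u i * Gmat k t s i $$ (r,a)) * Btilde k Sg $$ (r,q) * (u j * Gmat k t s j $$ (q,a)))"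
    by (rule sum4_swap)
  also have "\<dots> = qf (Btilde k Sg) k y y"
    unfolding qf_def y_def sum_distrib_left sum_distrib_right
    by (rule sum.cong[OF refl], rule sum.cong[OF refl], rule sum.swap)
  also have "\<dots> \<ge> 0" by (rule Btilde_psd[OF pd k])
  finally show ?thesis .
qed



lemma mp_inv_1: "mp_inv (mat 1 1 (\<lambda>_. g)) = mat 1 1 (\<lambda>_. if g = 0 then 0 else 1 / g)"
  unfolding mp_inv_def
proof (rule the_equality)
  show "mat 1 1 (\<lambda>_. if g = 0 then 0 else 1 / g) \<in> carrier_mat (dim_col (mat 1 1 (\<lambda>_. g))) (dim_row (mat 1 1 (\<lambda>_. g))) \<and>
    mat 1 1 (\<lambda>_. g) * mat 1 1 (\<lambda>_. if g = 0 then 0 else 1 / g) * mat 1 1 (\<lambda>_. g) = mat 1 1 (\<lambda>_. g) \<and>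
    mat 1 1 (\<lambda>_. if g = 0 then 0 else 1 / g) * mat 1 1 (\<lambda>_. g) * mat 1 1 (\<lambda>_. if g = 0 then 0 else 1 / g) = mat 1 1 (\<lambda>_. if g = 0 then 0 else 1 / g) \<and>
    (mat 1 1 (\<lambda>_. g) * mat 1 1 (\<lambda>_. if g = 0 then 0 else 1 / g))\<^sup>T = mat 1 1 (\<lambda>_. g) * mat 1 1 (\<lambda>_. if g = 0 then 0 else 1 / g) \<and>
    (mat 1 1 (\<lambda>_. if g = 0 then 0 else 1 / g) * mat 1 1 (\<lambda>_. g))\<^sup>T = mat 1 1 (\<lambda>_. if g = 0 then 0 else 1 / g) * mat 1 1 (\<lambda>_. g)"
    by (auto intro!: eq_matI simp: scalar_prod_def)
next
  fix X assume X: "X \<in> carrier_mat (dim_col (mat 1 1 (\<lambda>_. g))) (dim_row (mat 1 1 (\<lambda>_. g))) \<and>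
    mat 1 1 (\<lambda>_. g) * X * mat 1 1 (\<lambda>_. g) = mat 1 1 (\<lambda>_. g) \<and>
    X * mat 1 1 (\<lambda>_. g) * X = X \<and> (mat 1 1 (\<lambda>_. g) * X)\<^sup>T = mat 1 1 (\<lambda>_. g) * X \<and> (X * mat 1 1 (\<lambda>_. g))\<^sup>T = X * mat 1 1 (\<lambda>_. g)"
  hence Xc: "X \<in> carrier_mat 1 1" by simp
  define x where "x = X $$ (0,0)"
  have e1: "(mat 1 1 (\<lambda>_. g) * X * mat 1 1 (\<lambda>_. g)) $$ (0,0) = g * x * g"
    using Xc by (simp add: scalar_prod_def x_def)
  have e2: "(X * mat 1 1 (\<lambda>_. g) * X) $$ (0,0) = x * g * x"
    using Xc by (simp add: scalar_prod_def x_def)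
  have 1: "g * x * g = g" using X e1 by simp
  have 2: "x * g * x = x" using X e2 Xc by (simp add: x_def)
  have "x = (if g = 0 then 0 else 1 / g)"
  proof (cases "g = 0")
    case True thus ?thesis using 2 by simp
  next
    case False
    hence "g * x = 1" using 1 by (metis mult.commute mult_cancel_left2 mult.assoc)
    thus ?thesis using False by (simp add: field_simps)
  qed
  thus "X = mat 1 1 (\<lambda>_. if g = 0 then 0 else 1 / g)" using Xc
    by (intro eq_matI) (auto simp: x_def)
qed



context
  fixes k t :: nat and Sg :: "real mat" and p :: "nat list \<Rightarrow> real"
  assumes k2: "k \<ge> 2" and t2: "t \<ge> 2"
    and pd: "pos_def_mat k Sg"
    and meas: "is_measure k t p"
    and ps: "pseudo_symmetric k t Sg p"
begin

lemma k0: "k > 0" using k2 by simp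

lemma Cxi_entry: "a < t \<Longrightarrow> b < t \<Longrightarrow> Cxi k t Sg p i j $$ (a,b) = (\<Sum>s \<in> seqs k t. p s * Cs k t Sg s i j $$ (a,b))"
  by (simp add: Cxi_def)

lemma Cxi_rowsum: assumes a: "a < t" shows "(\<Sum>b<t. Cxi k t Sg p i j $$ (a,b)) = 0"
proof -
  have "(\<Sum>b<t. Cxi k t Sg p i j $$ (a,b)) = (\<Sum>b<t. \<Sum>s \<in> seqs k t. p s * Cs k t Sg s i j $$ (a,b))"
    by (rule sum.cong[OF refl], simp add: Cxi_entry a)
  also have "\<dots> = (\<Sum>s \<in> seqs k t. p s * (\<Sum>b<t. Cs k t Sg s i j $$ (a,b)))"
    by (subst sum.swap, simp add: sum_distrib_left)
  also have "\<dots> = 0" by (rule sum.neutral, simp add: Cs_rowsum[OF pd k0 a])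
  finally show ?thesis .
qed

definition "VV = Vxi k t Sg p"

lemma V_carrier: "VV \<in> carrier_mat 3 3" by (simp add: VV_def Vxi_def)

lemma Cxi_form: assumes i: "i < 3" and j: "j < 3" and x: "x < t" and y: "y < t"
  shows "Cxi k t Sg p i j $$ (x,y) = VV $$ (i,j) / (real t - 1) * ((if x = y then 1 else 0) - 1 / real t)"
proof -
  obtain al be where AB: "Cxi k t Sg p i j = al \<cdot>\<^sub>m 1\<^sub>m t + be \<cdot>\<^sub>m mat t t (\<lambda>_. 1)"
    using ps i j unfolding pseudo_symmetric_def completely_symmetric_def by blast
  have ent: "\<And>a b. a < t \<Longrightarrow> b < t \<Longrightarrow> Cxi k t Sg p i j $$ (a,b) = al * (if a = b then 1 else 0) + be"
    by (simp add: AB)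
  have t0: "0 < t" using t2 by simp
  have "0 = (\<Sum>b<t. Cxi k t Sg p i j $$ (0,b))" using Cxi_rowsum[OF t0] by simp
  also have "\<dots> = (\<Sum>b<t. al * (if 0 = b then 1 else 0) + be)" by (rule sum.cong[OF refl], simp add: ent t0)
  also have "\<dots> = (\<Sum>b<t. (if 0 = b then al else 0) + be)" by (rule sum.cong) auto
  also have "\<dots> = al + real t * be" using t0 by (simp add: sum.distrib)
  finally have r: "al + real t * be = 0" by simp
  have "VV $$ (i,j) = trace_mat (Cxi k t Sg p i j)" using i j by (simp add: VV_def Vxi_def)
  also have "\<dots> = (\<Sum>a<t. al + be)" unfolding trace_mat_def by (rule sum.cong, simp add: Cxi_def, simp add: ent)
  also have "\<dots> = real t * al + real t * be" by (simp add: algebra_simps)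
  finally have v: "VV $$ (i,j) = (real t - 1) * al" using r by (simp add: algebra_simps)
  have t1: "real t - 1 \<noteq> 0" "real t \<noteq> 0" using t2 by auto
  have be: "be = - al / real t" using r t1 by (simp add: field_simps)
  have al: "VV $$ (i,j) / (real t - 1) = al" using v t1 by simp
  show ?thesis unfolding al ent[OF x y] be by (simp add: algebra_simps)
qed

lemma Cuw_form: assumes u: "u \<in> carrier_vec 3" and w: "w \<in> carrier_vec 3" and x: "x < t" and y: "y < t"
  shows "Cuw k t Sg p u w $$ (x,y) = (u \<bullet> (VV *\<^sub>v w)) / (real t - 1) * ((if x = y then 1 else 0) - 1 / real t)"
proof -
  have "Cuw k t Sg p u w $$ (x,y) = (\<Sum>i<3. \<Sum>j<3. u $ i * w $ j * (VV $$ (i,j) / (real t - 1) * ((if x = y then 1 else 0) - 1 / real t)))"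
    using x y by (simp add: Cuw_def Cxi_form)
  also have "\<dots> = (\<Sum>i<3. u $ i * (\<Sum>j<3. VV $$ (i,j) * w $ j)) / (real t - 1) * ((if x = y then 1 else 0) - 1 / real t)"
    by (simp add: sum_distrib_left sum_distrib_right sum_divide_distrib ac_simps)
  also have "(\<Sum>i<3. u $ i * (\<Sum>j<3. VV $$ (i,j) * w $ j)) = u \<bullet> (VV *\<^sub>v w)"
    using u w V_carrier by (simp add: scalar_prod_def atLeast0LessThan row_def)
  finally show ?thesis .
qed

lemma V_psd: assumes u: "u \<in> carrier_vec 3" shows "u \<bullet> (VV *\<^sub>v u) \<ge> 0"
proof -
  have "u \<bullet> (VV *\<^sub>v u) = (\<Sum>i<3. \<Sum>j<3. u $ i * u $ j * VV $$ (i,j))"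
    using u V_carrier by (simp add: scalar_prod_def atLeast0LessThan row_def sum_distrib_left ac_simps)
  also have "\<dots> = (\<Sum>i<3. \<Sum>j<3. \<Sum>x<t. \<Sum>s\<in>seqs k t. u $ i * u $ j * (p s * Cs k t Sg s i j $$ (x,x)))"
    by (simp add: VV_def Vxi_def trace_mat_def Cxi_def sum_distrib_left)
  also have "\<dots> = (\<Sum>s\<in>seqs k t. \<Sum>x<t. \<Sum>i<3. \<Sum>j<3. u $ i * u $ j * (p s * Cs k t Sg s i j $$ (x,x)))"
    by (rule sum4_swap)
  also have "\<dots> = (\<Sum>s\<in>seqs k t. \<Sum>x<t. p s * (\<Sum>i<3. \<Sum>j<3. u $ i * u $ j * Cs k t Sg s i j $$ (x,x)))"
    by (simp add: sum_distrib_left ac_simps)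
  also have "\<dots> \<ge> 0"
  proof (rule sum_nonneg, rule sum_nonneg, rule mult_nonneg_nonneg)
    fix s x assume s: "s \<in> seqs k t" and x: "x \<in> {..<t}"
    show "p s \<ge> 0" using meas s by (simp add: is_measure_def)
    show "(\<Sum>i<3. \<Sum>j<3. u $ i * u $ j * Cs k t Sg s i j $$ (x,x)) \<ge> 0"
      using Cs_quad[OF pd k0, of x t "\<lambda>i. u $ i"] x by simp
  qed
  finally show ?thesis .
qed

lemma ell_carrier: "ell lam \<in> carrier_vec 3" "ell2 \<in> carrier_vec 3"
  unfolding carrier_vec_def ell_def ell2_def by simp_all

lemma Cuw_dims[simp]: "dim_row (Cuw k t Sg p u w) = t" "dim_col (Cuw k t Sg p u w) = t"
  by (simp_all add: Cuw_def)

lemma Cuw_tau: assumes u: "u \<in> carrier_vec 3" and w: "w \<in> carrier_vec 3"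
  and tau: "tau \<in> carrier_vec t" and st: "(\<Sum>i<t. tau $ i) = 0" and b: "b < t"
  shows "(Cuw k t Sg p u w *\<^sub>v tau) $ b = (u \<bullet> (VV *\<^sub>v w)) / (real t - 1) * tau $ b"
proof -
  define c where "c = (u \<bullet> (VV *\<^sub>v w)) / (real t - 1)"
  have "(Cuw k t Sg p u w *\<^sub>v tau) $ b = (\<Sum>y<t. Cuw k t Sg p u w $$ (b,y) * tau $ y)"
    using b tau by (simp add: Cuw_def scalar_prod_def atLeast0LessThan row_def)
  also have "\<dots> = (\<Sum>y<t. (if b = y then 1 else 0) * (c * tau $ y) - c / real t * tau $ y)"
  proof (rule sum.cong[OF refl])
    fix y assume "y \<in> {..<t}"
    hence y: "y < t" by simp
    have t0: "real t \<noteq> 0" using t2 by simp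
    show "Cuw k t Sg p u w $$ (b,y) * tau $ y = (if b = y then 1 else 0) * (c * tau $ y) - c / real t * tau $ y"
      unfolding Cuw_form[OF u w b y] c_def[symmetric] using t0 by (cases "b = y") (auto simp: field_simps)
  qed
  also have "\<dots> = c * tau $ b - c / real t * (\<Sum>y<t. tau $ y)"
    by (simp only: sum_subtractf sum_delta_l[OF b] sum_distrib_left)
  also have "\<dots> = c * tau $ b" using st by simp
  finally show ?thesis by (simp add: c_def)
qed

lemma Ctilde_form: fixes lam :: real assumes tau: "tau \<in> contrast_set t"
  defines "lVl \<equiv> ell lam \<bullet> (VV *\<^sub>v ell lam)"
  defines "bl \<equiv> ell lam \<bullet> (VV *\<^sub>v ell2)"
  defines "Q2 \<equiv> ell2 \<bullet> (VV *\<^sub>v ell2)"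
  defines "g \<equiv> Q2 / (real t - 1) * (\<Sum>i<t. tau $ i * tau $ i)"
  defines "gp \<equiv> (if g = 0 then 0 else 1 / g)"
  shows "Ctilde k t Sg p lam tau = mat t t (\<lambda>(x,y). (if x = y then lVl / (real t - 1) else 0)
     + (- (lVl / (real t - 1)) / real t) * 1 * 1 + (- ((bl / (real t - 1)) * (bl / (real t - 1)) * gp)) * tau $ x * tau $ y)"
proof -
  have tc: "tau \<in> carrier_vec t" and o: "ones_vec t \<bullet> tau = 0" using tau by (auto simp: contrast_set_def)
  have st: "(\<Sum>i<t. tau $ i) = 0" using o tc by (simp add: ones_vec_def scalar_prod_def atLeast0LessThan)
  note ec = ell_carrier
  define F where "F = mat 1 t (\<lambda>(a,b). (Cuw k t Sg p (ell lam) ([ell2] ! a) *\<^sub>v tau) $ b)"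
  define G where "G = mat 1 1 (\<lambda>(a,b). tau \<bullet> (Cuw k t Sg p ([ell2] ! a) ([ell2] ! b) *\<^sub>v tau))"
  have info: "Ctilde k t Sg p lam tau = Cuw k t Sg p (ell lam) (ell lam) - F\<^sup>T * mp_inv G * F"
    by (simp add: Ctilde_def Info_def Let_def F_def G_def)
  have Fe: "F $$ (0,b) = bl / (real t - 1) * tau $ b" if b: "b < t" for b
    using b Cuw_tau[OF ec(1) ec(2) tc st b] by (simp add: F_def bl_def)
  have gv: "tau \<bullet> (Cuw k t Sg p ell2 ell2 *\<^sub>v tau) = g"
  proof -
    have "tau \<bullet> (Cuw k t Sg p ell2 ell2 *\<^sub>v tau) = (\<Sum>b<t. tau $ b * (Q2 / (real t - 1) * tau $ b))"
      using tc Cuw_tau[OF ec(2) ec(2) tc st] by (simp add: scalar_prod_def atLeast0LessThan Q2_def Cuw_def)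
    also have "\<dots> = g" by (simp add: g_def sum_distrib_left ac_simps)
    finally show ?thesis .
  qed
  have G: "G = mat 1 1 (\<lambda>_. g)" by (rule eq_matI, auto simp: G_def gv)
  have X: "mp_inv G = mat 1 1 (\<lambda>_. gp)" unfolding G mp_inv_1 gp_def ..
  show ?thesis unfolding info X
  proof (rule eq_matI)
    fix x y assume "x < dim_row (mat t t (\<lambda>(x,y). (if x = y then lVl / (real t - 1) else 0)
     + (- (lVl / (real t - 1)) / real t) * 1 * 1 + (- ((bl / (real t - 1)) * (bl / (real t - 1)) * gp)) * tau $ x * tau $ y))"
      "y < dim_col (mat t t (\<lambda>(x,y). (if x = y then lVl / (real t - 1) else 0)
     + (- (lVl / (real t - 1)) / real t) * 1 * 1 + (- ((bl / (real t - 1)) * (bl / (real t - 1)) * gp)) * tau $ x * tau $ y))"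
    hence x: "x < t" and y: "y < t" by auto
    have Fc: "F \<in> carrier_mat 1 t" by (simp add: F_def)
    have "(F\<^sup>T * mat 1 1 (\<lambda>_. gp) * F) $$ (x,y) = F $$ (0,x) * gp * F $$ (0,y)"
      using x y Fc by (simp add: scalar_prod_def)
    thus "(Cuw k t Sg p (ell lam) (ell lam) - F\<^sup>T * mat 1 1 (\<lambda>_. gp) * F) $$ (x, y) =
      mat t t (\<lambda>(x,y). (if x = y then lVl / (real t - 1) else 0)
     + (- (lVl / (real t - 1)) / real t) * 1 * 1 + (- ((bl / (real t - 1)) * (bl / (real t - 1)) * gp)) * tau $ x * tau $ y) $$ (x,y)"
      using x y Fc by (simp add: Cuw_form[OF ec(1) ec(1) x y] Fe lVl_def[symmetric] algebra_simps)
  qed (auto simp: Cuw_def F_def)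
qed

lemma main_tau: fixes lam :: real assumes tau: "tau \<in> contrast_set t"
  defines "lVl \<equiv> ell lam \<bullet> (VV *\<^sub>v ell lam)"
  defines "bl \<equiv> ell lam \<bullet> (VV *\<^sub>v ell2)"
  defines "Q2 \<equiv> ell2 \<bullet> (VV *\<^sub>v ell2)"
  defines "q2 \<equiv> lVl - bl\<^sup>2 * (if Q2 = 0 then 0 else 1 / Q2)"
  shows "char_poly (Ctilde k t Sg p lam tau) =
     [:0, 1:] * [:- (q2 / (real t - 1)), 1:] * [:- (lVl / (real t - 1)), 1:] ^ (t - 2)"
proof -
  have tc: "tau \<in> carrier_vec t" and o: "ones_vec t \<bullet> tau = 0" and nz: "tau \<noteq> 0\<^sub>v t"
    using tau by (auto simp: contrast_set_def)
  have st: "(\<Sum>i<t. 1 * tau $ i) = 0" using o tc by (simp add: ones_vec_def scalar_prod_def atLeast0LessThan)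
  define S where "S = (\<Sum>i<t. tau $ i * tau $ i)"
  define g where "g = Q2 / (real t - 1) * S"
  define gp where "gp = (if g = 0 then 0 else 1 / g)"
  define al where "al = lVl / (real t - 1)"
  have t1: "real t - 1 > 0" "real t \<noteq> 0" using t2 by auto
  have Spos: "S > 0"
  proof -
    obtain i where i: "i < t" "tau $ i \<noteq> 0"
      using nz tc by (metis eq_vecI carrier_vecD index_zero_vec)
    have "tau $ i * tau $ i \<le> S" unfolding S_def
      by (rule member_le_sum, insert i, auto)
    moreover have "tau $ i * tau $ i > 0" using i by (simp add: zero_less_mult_iff linorder_neq_iff, blast)
    ultimately show ?thesis by simp
  qed
  have eq: "Ctilde k t Sg p lam tau = mat t t (\<lambda>(x,y). (if x = y then al else 0)
     + (- al / real t) * 1 * 1 + (- ((bl / (real t - 1)) * (bl / (real t - 1)) * gp)) * tau $ x * tau $ y)"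
    unfolding Ctilde_form[OF tau] al_def gp_def g_def S_def bl_def Q2_def lVl_def by simp
  have cp: "char_poly (Ctilde k t Sg p lam tau) = [:- (al + (- al / real t) * (\<Sum>i<t. 1 * 1)), 1:]
     * [:- (al + (- ((bl / (real t - 1)) * (bl / (real t - 1)) * gp)) * S), 1:] * [:- al, 1:] ^ (t - 2)"
    unfolding eq S_def by (rule char_poly_rank_two[OF t2 st])
  have e1: "al + (- al / real t) * (\<Sum>i<t. 1 * 1) = 0" using t1 by simp
  have e2: "al + (- ((bl / (real t - 1)) * (bl / (real t - 1)) * gp)) * S = q2 / (real t - 1)"
  proof (cases "Q2 = 0")
    case True
    thus ?thesis by (simp add: g_def gp_def q2_def al_def)
  next
    case False
    hence g0: "g \<noteq> 0" using Spos t1 by (simp add: g_def)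
    define T where "T = real t - 1"
    have T: "T > 0" using t1 by (simp add: T_def)
    have gp: "gp = T / (Q2 * S)" using g0 by (simp add: gp_def g_def T_def[symmetric])
    have "(bl / T) * (bl / T) * gp * S = bl\<^sup>2 / Q2 / T"
      unfolding gp using T Spos False by (simp add: field_simps power2_eq_square)
    hence "al + (- ((bl / T) * (bl / T) * gp)) * S = (lVl - bl\<^sup>2 / Q2) / T"
      by (simp add: al_def T_def[symmetric] diff_divide_distrib)
    thus ?thesis using False by (simp add: q2_def T_def)
  qed
  show ?thesis unfolding cp e1 e2 by (simp add: al_def)
qed

lemma main_q2: fixes lam :: real
  defines "lVl \<equiv> ell lam \<bullet> (VV *\<^sub>v ell lam)"
  defines "bl \<equiv> ell lam \<bullet> (VV *\<^sub>v ell2)"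
  defines "Q2 \<equiv> ell2 \<bullet> (VV *\<^sub>v ell2)"
  defines "q2 \<equiv> lVl - bl\<^sup>2 * (if Q2 = 0 then 0 else 1 / Q2)"
  shows "q2 \<le> lVl"
proof -
  have "Q2 \<ge> 0" unfolding Q2_def by (rule V_psd[OF ell_carrier(2)])
  hence "bl\<^sup>2 * (if Q2 = 0 then 0 else 1 / Q2) \<ge> 0" by simp
  thus ?thesis by (simp add: q2_def)
qed

end

theorem proposition5:
  fixes k t :: nat and Sg :: "real mat" and p :: "nat list \<Rightarrow> real" and lam :: real
  assumes "k \<ge> 2" and "t \<ge> 2"
    and "pos_def_mat k Sg"
    and "is_measure k t p"
    and "pseudo_symmetric k t Sg p"
  defines "V \<equiv> Vxi k t Sg p"
  defines "Q2 \<equiv> ell2 \<bullet> (V *\<^sub>v ell2)"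
  defines "lVl \<equiv> ell lam \<bullet> (V *\<^sub>v ell lam)"
  defines "q2 \<equiv> lVl - (ell lam \<bullet> (V *\<^sub>v ell2))\<^sup>2 * (if Q2 = 0 then 0 else 1 / Q2)"
  shows "(\<forall>tau \<in> contrast_set t.
            char_poly (Ctilde k t Sg p lam tau) =
              [:0, 1:] * [:- (q2 / (real t - 1)), 1:] * [:- (lVl / (real t - 1)), 1:] ^ (t - 2))
         \<and> q2 \<le> lVl"
  using main_tau[OF assms(1-5), of _ lam] main_q2[OF assms(1-5), of lam]
  unfolding VV_def[OF assms(1-5)] q2_def lVl_def Q2_def V_def
  by blast


end
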